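(* Let $f\in\ell^2(V,w)$ be nonnegative and not identically zero with $\mathrm{vol}(\mathrm{supp}(f))\le\mathrm{vol}(V)/2$, and let $a>b\ge0$ and $I=(b,a]$. If $\phi(f)\,\mathrm{vol}_f(a)+\mathrm{vol}_f(I)>0$, then $$\mathcal E_f(I)\ge\frac{\phi(f)^2\,\mathrm{vol}_f(a)^2\,\mathrm{len}(I)^2}{\phi(f)\,\mathrm{vol}_f(a)+\mathrm{vol}_f(I)}.$$
   Context: $G=(V,E,w)$ finite undirected, positive edge weights, $w(v)=\sum_{u\sim v}w(u,v)\ge1$, $\mathrm{vol}(S)=\sum_{v\in S}w(v)$, $\mathrm{supp}(f)=\{v:f(v)\ne0\}$. Conductance $\phi(S)=w(E(S,\overline S))/\min\{\mathrm{vol}(S),\mathrm{vol}(\overline S)\}$ for $\emptyset\ne S\subsetneq V$; $V_f(t)=\{v:f(v)\ge t\}$; $\phi(f)=\min\{\phi(V_f(t)):\emptyset\ne V_f(t)\ne V\}$. For reals $t_1,t_2$, $[t_1,t_2]$ denotes the half-open interval $(\min\{t_1,t_2\},\max\{t_1,t_2\}]$, and $\mathrm{len}$ denotes length. $\mathrm{vol}_f(a)=\mathrm{vol}(\{v:f(v)\ge a\})$ and, for an interval $I$, $\mathrm{vol}_f(I)=\mathrm{vol}(\{v:f(v)\in I\})$. The energy of $f$ restricted to $I$ is $\mathcal E_f(I)=\sum_{\{u,v\}\in E}w(u,v)\,\mathrm{len}(I\cap[f(u),f(v)])^2$. *)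

theory Defs
  imports "HOL-Analysis.Analysis"
begin

text \<open>Weighted graph on finite vertex set V, symmetric weight function w
  (w u v > 0 iff {u,v} is an edge, w u v = 0 otherwise), no loops.\<close>

definition wgraph :: "'a set \<Rightarrow> ('a \<Rightarrow> 'a \<Rightarrow> real) \<Rightarrow> bool" where
  "wgraph V w \<longleftrightarrow> finite V \<and> (\<forall>u v. w u v = w v u) \<and> (\<forall>u v. w u v \<ge> 0)
     \<and> (\<forall>u. w u u = 0) \<and> (\<forall>u v. w u v \<noteq> 0 \<longrightarrow> u \<in> V \<and> v \<in> V)"

definition degw :: "'a set \<Rightarrow> ('a \<Rightarrow> 'a \<Rightarrow> real) \<Rightarrow> 'a \<Rightarrow> real" where
  "degw V w v = (\<Sum>u\<in>V. w u v)"

definition vol :: "'a set \<Rightarrow> ('a \<Rightarrow> 'a \<Rightarrow> real) \<Rightarrow> 'a set \<Rightarrow> real" where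
  "vol V w S = (\<Sum>v\<in>S. degw V w v)"

definition supp :: "'a set \<Rightarrow> ('a \<Rightarrow> real) \<Rightarrow> 'a set" where
  "supp V f = {v\<in>V. f v \<noteq> 0}"

definition cut :: "'a set \<Rightarrow> ('a \<Rightarrow> 'a \<Rightarrow> real) \<Rightarrow> 'a set \<Rightarrow> real" where
  "cut V w S = (\<Sum>u\<in>S. \<Sum>v\<in>V - S. w u v)"

definition conductance :: "'a set \<Rightarrow> ('a \<Rightarrow> 'a \<Rightarrow> real) \<Rightarrow> 'a set \<Rightarrow> real" where
  "conductance V w S = cut V w S / min (vol V w S) (vol V w (V - S))"

definition level_set :: "'a set \<Rightarrow> ('a \<Rightarrow> real) \<Rightarrow> real \<Rightarrow> 'a set" where
  "level_set V f t = {v\<in>V. f v \<ge> t}"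

text \<open>phi(f): minimum over nontrivial level sets (finitely many distinct ones).\<close>
definition phi_fun :: "'a set \<Rightarrow> ('a \<Rightarrow> 'a \<Rightarrow> real) \<Rightarrow> ('a \<Rightarrow> real) \<Rightarrow> real" where
  "phi_fun V w f = Min {conductance V w (level_set V f t) | t.
       level_set V f t \<noteq> {} \<and> level_set V f t \<noteq> V}"

definition vol_ge :: "'a set \<Rightarrow> ('a \<Rightarrow> 'a \<Rightarrow> real) \<Rightarrow> ('a \<Rightarrow> real) \<Rightarrow> real \<Rightarrow> real" where
  "vol_ge V w f a = vol V w {v\<in>V. f v \<ge> a}"

definition vol_int :: "'a set \<Rightarrow> ('a \<Rightarrow> 'a \<Rightarrow> real) \<Rightarrow> ('a \<Rightarrow> real) \<Rightarrow> real set \<Rightarrow> real" where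
  "vol_int V w f I = vol V w {v\<in>V. f v \<in> I}"

definition len_inter :: "real \<Rightarrow> real \<Rightarrow> real \<Rightarrow> real \<Rightarrow> real" where
  "len_inter b1 a1 b2 a2 = max 0 (min a1 a2 - max b1 b2)"

text \<open>Energy restricted to I = (b,a]; each unordered edge counted once (factor 1/2
  over ordered pairs, loops have weight 0).\<close>
definition energy :: "'a set \<Rightarrow> ('a \<Rightarrow> 'a \<Rightarrow> real) \<Rightarrow> ('a \<Rightarrow> real) \<Rightarrow> real \<Rightarrow> real \<Rightarrow> real" where
  "energy V w f b a = (1/2) * (\<Sum>u\<in>V. \<Sum>v\<in>V. w u v *
       (len_inter b a (min (f u) (f v)) (max (f u) (f v)))\<^sup>2)"

end

theory Submission
  imports Defs
begin

lemma len_split: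
  assumes "b \<le> c" "c \<le> a" "m \<le> M"
  shows "len_inter b a m M = len_inter b c m M + len_inter c a m M"
  using assms unfolding len_inter_def by (auto simp: max_def min_def)

lemma len_base:
  assumes "b < a" "m \<le> M" "m \<notin> {b<..<a}" "M \<notin> {b<..<a}"
  shows "len_inter b a m M = (a - b) * (if m < a \<and> a \<le> M then 1 else 0)"
  using assms unfolding len_inter_def by (auto simp: max_def min_def)

lemma coarea:
  fixes E :: "'e set" and c m M :: "'e \<Rightarrow> real"
  assumes fin: "finite E" and c: "\<forall>e\<in>E. c e \<ge> 0" and mM: "\<forall>e\<in>E. m e \<le> M e"
  shows "b \<le> a \<Longrightarrow> (\<forall>t. b < t \<and> t \<le> a \<longrightarrow> K \<le> (\<Sum>e\<in>E. if m e < t \<and> t \<le> M e then c e else 0))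
    \<Longrightarrow> K * (a-b) \<le> (\<Sum>e\<in>E. c e * len_inter b a (m e) (M e))"
proof (induction "card ((m`E \<union> M`E) \<inter> {b<..<a})" arbitrary: b a rule: less_induct)
  case less
  define P where "P = m`E \<union> M`E"
  have finP: "finite P" using fin by (simp add: P_def)
  show ?case
  proof (cases "P \<inter> {b<..<a} = {}")
    case True
    show ?thesis
    proof (cases "b = a")
      case True
      then show ?thesis using c by (auto intro!: sum_nonneg simp: len_inter_def)
    next
      case False
      then have ba: "b < a" using less.prems by simp
      have "(\<Sum>e\<in>E. c e * len_inter b a (m e) (M e)) =
            (\<Sum>e\<in>E. (a - b) * (if m e < a \<and> a \<le> M e then c e else 0))"
      proof (rule sum.cong)
        fix e assume e: "e \<in> E"
        have "m e \<notin> {b<..<a}" "M e \<notin> {b<..<a}" using True e by (auto simp: P_def)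
        then show "c e * len_inter b a (m e) (M e) = (a - b) * (if m e < a \<and> a \<le> M e then c e else 0)"
          using len_base[OF ba mM[rule_format, OF e]] by simp
      qed simp
      also have "\<dots> = (a - b) * (\<Sum>e\<in>E. if m e < a \<and> a \<le> M e then c e else 0)"
        by (simp add: sum_distrib_left)
      finally show ?thesis using less.prems ba by (simp add: mult.commute)
    qed
  next
    case False
    then obtain x where x: "x \<in> P" "b < x" "x < a" by auto
    have lt1: "card (P \<inter> {b<..<x}) < card (P \<inter> {b<..<a})"
      by (rule psubset_card_mono) (use finP x in auto)
    have lt2: "card (P \<inter> {x<..<a}) < card (P \<inter> {b<..<a})"
      by (rule psubset_card_mono) (use finP x in auto)
    have h1: "K * (x - b) \<le> (\<Sum>e\<in>E. c e * len_inter b x (m e) (M e))"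
      using less.hyps[of b x] lt1 less.prems x by (auto simp: P_def)
    have h2: "K * (a - x) \<le> (\<Sum>e\<in>E. c e * len_inter x a (m e) (M e))"
      using less.hyps[of x a] lt2 less.prems x by (auto simp: P_def)
    have "(\<Sum>e\<in>E. c e * len_inter b a (m e) (M e)) =
        (\<Sum>e\<in>E. c e * len_inter b x (m e) (M e)) + (\<Sum>e\<in>E. c e * len_inter x a (m e) (M e))"
      unfolding sum.distrib[symmetric]
    proof (rule sum.cong)
      fix e assume e: "e \<in> E"
      have "len_inter b a (m e) (M e) = len_inter b x (m e) (M e) + len_inter x a (m e) (M e)"
        using x mM e by (intro len_split) auto
      then show "c e * len_inter b a (m e) (M e) = c e * len_inter b x (m e) (M e) + c e * len_inter x a (m e) (M e)"
        by (simp add: distrib_left)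
    qed simp
    then show ?thesis using h1 h2 by (simp add: algebra_simps)
  qed
qed

lemma final_alg:
  fixes p D L x y E1 W :: real
  assumes "p \<ge> 0" "D \<ge> 0" "p + D > 0" "L > 0" "x \<ge> 0" "y \<ge> 0" "x + y \<ge> p * L"
    "x\<^sup>2 \<le> E1 * W" "0 \<le> W" "W \<le> D" "E1 \<ge> 0"
  shows "(p*L)\<^sup>2 / (p + D) \<le> E1 + L * y"
proof -
  have key: "(p*L)\<^sup>2 \<le> (E1 + L * y) * (p + D)"
  proof (cases "y \<ge> p * L")
    case True
    have "(p*L)\<^sup>2 = (p*L) * (p * L)" by (simp add: power2_eq_square)
    also have "\<dots> \<le> (L*y) * p" using mult_left_mono[OF True, of "p*L"] assms
      by (simp add: algebra_simps)
    also have "\<dots> \<le> (E1 + L * y) * (p + D)"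
    proof -
      have "0 \<le> E1*(p+D)" "0 \<le> (L*y)*D" using assms by auto
      moreover have "(E1 + L * y) * (p + D) = E1*(p+D) + (L*y)*p + (L*y)*D" by (simp add: algebra_simps)
      ultimately show ?thesis by linarith
    qed
    finally show ?thesis .
  next
    case False
    define z where "z = y / L"
    have y: "y = z * L" using assms(4) by (simp add: z_def)
    have z0: "0 \<le> z" "z < p" using False assms(4,6) y by (auto simp: zero_le_mult_iff)
    have xz: "x \<ge> (p - z) * L" using assms(7) y by (simp add: algebra_simps)
    have "((p - z) * L)\<^sup>2 \<le> x\<^sup>2" using xz z0 assms(4)
      by (intro power_mono) auto
    also have "\<dots> \<le> E1 * D" using assms(8) mult_left_mono[OF assms(10) assms(11)] by linarith
    finally have A: "((p - z) * L)\<^sup>2 \<le> E1 * D" .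
    have Dp: "D > 0"
    proof (rule ccontr)
      assume "\<not> D > 0" then have "D = 0" using assms by simp
      moreover have "(p - z) * L \<noteq> 0" using z0 assms(4) by simp
      then have "((p - z) * L)\<^sup>2 > 0" by simp
      ultimately show False using A by simp
    qed
    have sos: "0 \<le> z*(D - (p-z)/2)\<^sup>2 + (p-z)\<^sup>2*(p - z/4)" using z0 by auto
    have "(p*L)\<^sup>2 * D \<le> (E1 * D + L * y * D) * (p + D)"
    proof -
      have "(E1 * D + L * y * D) * (p + D) \<ge> (((p - z) * L)\<^sup>2 + L * y * D) * (p + D)"
        using A assms Dp by (intro mult_right_mono) auto
      moreover have "(((p - z) * L)\<^sup>2 + L * y * D) * (p + D) - (p*L)\<^sup>2 * D
          = L\<^sup>2 * (z*(D - (p-z)/2)\<^sup>2 + (p-z)\<^sup>2*(p - z/4))"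
        unfolding y by (simp add: power2_eq_square field_simps)
      moreover have "L\<^sup>2 * (z*(D - (p-z)/2)\<^sup>2 + (p-z)\<^sup>2*(p - z/4)) \<ge> 0" using sos by simp
      ultimately show ?thesis by linarith
    qed
    then have "(p*L)\<^sup>2 * D \<le> ((E1 + L * y) * (p + D)) * D" by (simp add: algebra_simps)
    then show ?thesis using Dp by simp
  qed
  then show ?thesis using assms(3) by (simp add: divide_le_eq)
qed


lemma len_outside:
  assumes "b < a" "m \<le> M" "m \<notin> {b<..a}" "M \<notin> {b<..a}"
  shows "(len_inter b a m M)\<^sup>2 = (a - b) * len_inter b a m M"
  using assms unfolding len_inter_def by (auto simp: max_def min_def power2_eq_square)

lemma len_nn: "len_inter b a m M \<ge> 0" by (simp add: len_inter_def)

lemma cut_identity: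
  fixes V :: "'a set" and w :: "'a \<Rightarrow> 'a \<Rightarrow> real" and f :: "'a \<Rightarrow> real"
  assumes fin: "finite V" and sym: "\<forall>u v. w u v = w v u"
  shows "(\<Sum>p\<in>V\<times>V. if min (f (fst p)) (f (snd p)) < t \<and> t \<le> max (f (fst p)) (f (snd p))
      then w (fst p) (snd p) / 2 else 0) = cut V w (level_set V f t)"
proof -
  define S where "S = level_set V f t"
  have SV: "S \<subseteq> V" by (auto simp: S_def level_set_def)
  have memS: "\<And>u. u \<in> V \<Longrightarrow> u \<in> S \<longleftrightarrow> f u \<ge> t" by (auto simp: S_def level_set_def)
  define g where "g u v = (if u \<in> S \<and> v \<notin> S then w u v else 0)" for u v
  have pt: "\<And>u v. u \<in> V \<Longrightarrow> v \<in> V \<Longrightarrow>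
      (if min (f u) (f v) < t \<and> t \<le> max (f u) (f v) then w u v / 2 else 0) = g u v / 2 + g v u / 2"
    using memS sym by (auto simp: g_def min_def max_def)
  have "(\<Sum>p\<in>V\<times>V. if min (f (fst p)) (f (snd p)) < t \<and> t \<le> max (f (fst p)) (f (snd p))
      then w (fst p) (snd p) / 2 else 0) = (\<Sum>u\<in>V. \<Sum>v\<in>V. if min (f u) (f v) < t \<and> t \<le> max (f u) (f v) then w u v / 2 else 0)"
    by (simp add: sum.cartesian_product case_prod_beta)
  also have "\<dots> = (\<Sum>u\<in>V. \<Sum>v\<in>V. g u v / 2 + g v u / 2)"
    using pt by (intro sum.cong refl) auto
  also have "\<dots> = (\<Sum>u\<in>V. \<Sum>v\<in>V. g u v) / 2 + (\<Sum>u\<in>V. \<Sum>v\<in>V. g v u) / 2"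
    by (simp add: sum.distrib sum_divide_distrib)
  also have "(\<Sum>u\<in>V. \<Sum>v\<in>V. g v u) = (\<Sum>u\<in>V. \<Sum>v\<in>V. g u v)"
    by (rule sum.swap)
  also have "(\<Sum>u\<in>V. \<Sum>v\<in>V. g u v) = cut V w S"
  proof -
    have "(\<Sum>u\<in>V. \<Sum>v\<in>V. g u v) = (\<Sum>u\<in>V. if u \<in> S then (\<Sum>v\<in>V. if v \<in> -S then w u v else 0) else 0)"
      by (intro sum.cong refl) (auto simp: g_def)
    also have "\<dots> = (\<Sum>u\<in>V. if u \<in> S then (\<Sum>v\<in>V \<inter> -S. w u v) else 0)"
    proof -
      have eq: "\<And>u. (\<Sum>v\<in>V \<inter> -S. w u v) = (\<Sum>v\<in>V. if v \<in> -S then w u v else 0)"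
        by (rule sum.inter_restrict[OF fin])
      show ?thesis by (simp only: eq)
    qed
    also have "\<dots> = (\<Sum>u\<in>V \<inter> S. (\<Sum>v\<in>V \<inter> -S. w u v))"
      by (rule sum.inter_restrict[OF fin, symmetric])
    also have "\<dots> = cut V w S" unfolding cut_def using SV
      by (simp add: Diff_eq Int_absorb1 Int_absorb2 inf_commute)
    finally show ?thesis .
  qed
  finally show ?thesis by (simp add: S_def)
qed


theorem mainTheorem6:
  fixes V :: "'a set" and w :: "'a \<Rightarrow> 'a \<Rightarrow> real" and f :: "'a \<Rightarrow> real"
    and a b :: real
  assumes "wgraph V w"
    and "\<forall>v\<in>V. degw V w v \<ge> 1"
    and "\<forall>v\<in>V. f v \<ge> 0"
    and "\<exists>v\<in>V. f v \<noteq> 0"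
    and "vol V w (supp V f) \<le> vol V w V / 2"
    and "a > b" and "b \<ge> 0"
    and "phi_fun V w f * vol_ge V w f a + vol_int V w f {b<..a} > 0"
  shows "energy V w f b a \<ge>
    (phi_fun V w f)\<^sup>2 * (vol_ge V w f a)\<^sup>2 * (a - b)\<^sup>2 /
      (phi_fun V w f * vol_ge V w f a + vol_int V w f {b<..a})"
proof -
  have fin: "finite V" and sym: "\<forall>u v. w u v = w v u" and wnn: "\<forall>u v. w u v \<ge> 0"
    using assms(1) by (auto simp: wgraph_def)
  define \<phi> where "\<phi> = phi_fun V w f"
  define Va where "Va = vol_ge V w f a"
  define D where "D = vol_int V w f {b<..a}"
  define L where "L = a - b"
  define S where "S t = level_set V f t" for t
  have Lpos: "L > 0" using assms(6) by (simp add: L_def)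
  have degnn: "\<And>v. degw V w v \<ge> 0" unfolding degw_def using wnn by (simp add: sum_nonneg)
  have volnn: "\<And>A. vol V w A \<ge> 0" unfolding vol_def using degnn by (simp add: sum_nonneg)
  have volmono: "\<And>A B. A \<subseteq> B \<Longrightarrow> B \<subseteq> V \<Longrightarrow> vol V w A \<le> vol V w B"
    unfolding vol_def using degnn fin by (intro sum_mono2) (auto intro: finite_subset)
  have cutnn: "\<And>A. cut V w A \<ge> 0" unfolding cut_def using wnn by (simp add: sum_nonneg)
  have SV: "\<And>t. S t \<subseteq> V" by (auto simp: S_def level_set_def)
  have Va_S: "Va = vol V w (S a)" by (simp add: Va_def vol_ge_def S_def level_set_def)
  obtain z where z: "z \<in> V" "f z = 0"
  proof -
    have "supp V f \<noteq> V"
    proof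
      assume eq: "supp V f = V"
      obtain v where "v \<in> V" using assms(4) by auto
      have "vol V w V \<ge> degw V w v" unfolding vol_def
        using \<open>v \<in> V\<close> fin degnn by (intro member_le_sum) auto
      then have "vol V w V \<ge> 1" using assms(2) \<open>v \<in> V\<close> by fastforce
      then show False using assms(5) eq by simp
    qed
    then show ?thesis using that by (auto simp: supp_def)
  qed
  have phi_bd: "\<phi> \<ge> 0 \<and> \<phi> * vol V w (S t) \<le> cut V w (S t)" if t: "t > 0" "S t \<noteq> {}" for t
  proof -
    define C where "C = {conductance V w (level_set V f t) | t.
       level_set V f t \<noteq> {} \<and> level_set V f t \<noteq> V}"
    have phiC: "\<phi> = Min C" by (simp add: \<phi>_def phi_fun_def C_def)
    have finC: "finite C"
    proof (rule finite_subset)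
      show "C \<subseteq> (\<lambda>A. conductance V w A) ` Pow V" by (auto simp: C_def level_set_def)
      show "finite ((\<lambda>A. conductance V w A) ` Pow V)" using fin by simp
    qed
    have StV: "S t \<noteq> V"
    proof
      assume "S t = V" then have "z \<in> S t" using z by simp
      then show False using z t(1) by (simp add: S_def level_set_def)
    qed
    have inC: "conductance V w (S t) \<in> C" using t(2) StV by (auto simp: C_def S_def)
    have Cnn: "\<forall>c\<in>C. c \<ge> 0" unfolding C_def conductance_def using cutnn volnn by auto
    have phinn: "\<phi> \<ge> 0" using phiC finC inC Cnn Min_in by (metis empty_iff)
    have phile: "\<phi> \<le> conductance V w (S t)" using phiC finC inC by simp
    have Ssupp: "S t \<subseteq> supp V f" using t(1) by (auto simp: S_def level_set_def supp_def)
    have supV: "supp V f \<subseteq> V" by (auto simp: supp_def)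
    have volsplit: "vol V w V = vol V w (S t) + vol V w (V - S t)"
      unfolding vol_def using fin SV[of t] by (metis sum.subset_diff add.commute)
    have "vol V w (S t) \<le> vol V w (supp V f)" using volmono[OF Ssupp supV] .
    then have minS: "min (vol V w (S t)) (vol V w (V - S t)) = vol V w (S t)"
      using assms(5) volsplit by simp
    obtain u where u: "u \<in> S t" using t(2) by auto
    have "vol V w (S t) \<ge> degw V w u" unfolding vol_def
      using u fin SV[of t] degnn by (intro member_le_sum) (auto intro: finite_subset)
    then have volpos: "vol V w (S t) > 0" using assms(2) u SV[of t] by fastforce
    have "conductance V w (S t) = cut V w (S t) / vol V w (S t)"
      by (simp add: conductance_def minS)
    then have "\<phi> * vol V w (S t) \<le> cut V w (S t)" using phile volpos by (simp add: le_divide_eq)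
    then show ?thesis using phinn by simp
  qed
  have pnn: "\<phi> * Va \<ge> 0"
  proof (cases "S a = {}")
    case True then show ?thesis by (simp add: Va_S vol_def)
  next
    case False
    then show ?thesis using phi_bd[of a] assms(6,7) volnn Va_S by simp
  qed

  define l where "l u v = len_inter b a (min (f u) (f v)) (max (f u) (f v))" for u v
  define T where "T u v = (f u \<in> {b<..a} \<or> f v \<in> {b<..a})" for u v
  define c where "c p = w (fst p) (snd p) / 2" for p
  have cnn: "\<And>p. c p \<ge> 0" using wnn by (simp add: c_def)
  have finVV: "finite (V \<times> V)" using fin by simp
  have Kbd: "\<forall>t. b < t \<and> t \<le> a \<longrightarrow> \<phi> * Va \<le> (\<Sum>p\<in>V\<times>V.
      if min (f (fst p)) (f (snd p)) < t \<and> t \<le> max (f (fst p)) (f (snd p)) then c p else 0)"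
  proof (intro allI impI)
    fix t assume t: "b < t \<and> t \<le> a"
    have eq: "(\<Sum>p\<in>V\<times>V.
      if min (f (fst p)) (f (snd p)) < t \<and> t \<le> max (f (fst p)) (f (snd p)) then c p else 0)
      = cut V w (S t)" unfolding c_def S_def by (rule cut_identity[OF fin sym])
    have SaSt: "S a \<subseteq> S t" using t by (auto simp: S_def level_set_def)
    show "\<phi> * Va \<le> (\<Sum>p\<in>V\<times>V.
      if min (f (fst p)) (f (snd p)) < t \<and> t \<le> max (f (fst p)) (f (snd p)) then c p else 0)"
    proof (cases "S t = {}")
      case True
      then have "S a = {}" using SaSt by auto
      then show ?thesis using eq cutnn by (simp add: Va_S vol_def)
    next
      case False
      have tp: "t > 0" using t assms(7) by simp
      have "Va \<le> vol V w (S t)" using Va_S volmono[OF SaSt SV] by simp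
      then have "\<phi> * Va \<le> \<phi> * vol V w (S t)" using phi_bd[OF tp False] by (simp add: mult_left_mono)
      then show ?thesis using phi_bd[OF tp False] eq by simp
    qed
  qed
  have Xbd: "\<phi> * Va * (a - b) \<le> (\<Sum>p\<in>V\<times>V. c p * l (fst p) (snd p))"
    unfolding l_def
    by (rule coarea[OF finVV, of c "\<lambda>p. min (f (fst p)) (f (snd p))" "\<lambda>p. max (f (fst p)) (f (snd p))"])
       (use cnn Kbd assms(6) in auto)
  define x where "x = (\<Sum>p\<in>V\<times>V. if T (fst p) (snd p) then c p * l (fst p) (snd p) else 0)"
  define y where "y = (\<Sum>p\<in>V\<times>V. if T (fst p) (snd p) then 0 else c p * l (fst p) (snd p))"
  define E1 where "E1 = (\<Sum>p\<in>V\<times>V. if T (fst p) (snd p) then c p * (l (fst p) (snd p))\<^sup>2 else 0)"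
  define W where "W = (\<Sum>p\<in>V\<times>V. if T (fst p) (snd p) then c p else 0)"
  have lnn: "\<And>u v. l u v \<ge> 0" by (simp add: l_def len_nn)
  have xnn: "x \<ge> 0" unfolding x_def using cnn lnn by (intro sum_nonneg) auto
  have ynn: "y \<ge> 0" unfolding y_def using cnn lnn by (intro sum_nonneg) auto
  have E1nn: "E1 \<ge> 0" unfolding E1_def using cnn by (intro sum_nonneg) auto
  have Wnn: "W \<ge> 0" unfolding W_def using cnn by (intro sum_nonneg) auto
  have Dnn: "D \<ge> 0" unfolding D_def vol_int_def by (rule volnn)
  have xy: "x + y \<ge> \<phi> * Va * L"
  proof -
    have "x + y = (\<Sum>p\<in>V\<times>V. c p * l (fst p) (snd p))"
      unfolding x_def y_def sum.distrib[symmetric] by (intro sum.cong) auto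
    then show ?thesis using Xbd by (simp add: L_def)
  qed
  have en: "energy V w f b a = E1 + L * y"
  proof -
    have "energy V w f b a = (\<Sum>p\<in>V\<times>V. c p * (l (fst p) (snd p))\<^sup>2)"
      unfolding energy_def c_def l_def
      by (simp add: sum.cartesian_product case_prod_beta sum_distrib_left)
    also have "\<dots> = (\<Sum>p\<in>V\<times>V. (if T (fst p) (snd p) then c p * (l (fst p) (snd p))\<^sup>2 else 0)
        + L * (if T (fst p) (snd p) then 0 else c p * l (fst p) (snd p)))"
    proof (intro sum.cong refl)
      fix p assume "p \<in> V \<times> V"
      show "c p * (l (fst p) (snd p))\<^sup>2 = (if T (fst p) (snd p) then c p * (l (fst p) (snd p))\<^sup>2 else 0)
        + L * (if T (fst p) (snd p) then 0 else c p * l (fst p) (snd p))"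
      proof (cases "T (fst p) (snd p)")
        case False
        have "(l (fst p) (snd p))\<^sup>2 = L * l (fst p) (snd p)"
          unfolding l_def L_def
          by (rule len_outside) (use assms(6) False in \<open>auto simp: T_def min_def max_def\<close>)
        then show ?thesis using False by simp
      qed simp
    qed
    also have "\<dots> = E1 + L * y" unfolding E1_def y_def
      by (simp add: sum.distrib sum_distrib_left)
    finally show ?thesis .
  qed
  have CS: "x\<^sup>2 \<le> E1 * W"
  proof -
    define A where "A p = (if T (fst p) (snd p) then sqrt (c p) * l (fst p) (snd p) else 0)" for p
    define B where "B p = (if T (fst p) (snd p) then sqrt (c p) else 0)" for p
    have "(\<Sum>p\<in>V\<times>V. A p * B p)\<^sup>2 \<le> (\<Sum>p\<in>V\<times>V. (A p)\<^sup>2) * (\<Sum>p\<in>V\<times>V. (B p)\<^sup>2)"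
      by (rule Cauchy_Schwarz_ineq_sum)
    moreover have "(\<Sum>p\<in>V\<times>V. A p * B p) = x" unfolding x_def A_def B_def
      using cnn by (intro sum.cong refl) (auto simp: real_sqrt_mult_self algebra_simps)
    moreover have "(\<Sum>p\<in>V\<times>V. (A p)\<^sup>2) = E1" unfolding E1_def A_def
      using cnn by (intro sum.cong refl) (auto simp: power_mult_distrib)
    moreover have "(\<Sum>p\<in>V\<times>V. (B p)\<^sup>2) = W" unfolding W_def B_def
      using cnn by (intro sum.cong refl) auto
    ultimately show ?thesis by simp
  qed
  have WD: "W \<le> D"
  proof -
    define J where "J = {b<..a}"
    have dsum: "D = (\<Sum>v\<in>V. if f v \<in> J then degw V w v else 0)"
      unfolding D_def vol_int_def vol_def J_def by (simp add: sum.inter_filter[OF fin])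
    have h2: "(\<Sum>p\<in>V\<times>V. if f (snd p) \<in> J then c p else 0) = D / 2"
    proof -
      have "(\<Sum>p\<in>V\<times>V. if f (snd p) \<in> J then c p else 0)
          = (\<Sum>u\<in>V. \<Sum>v\<in>V. if f v \<in> J then w u v / 2 else 0)"
        unfolding c_def by (simp add: sum.cartesian_product case_prod_beta)
      also have "\<dots> = (\<Sum>v\<in>V. \<Sum>u\<in>V. if f v \<in> J then w u v / 2 else 0)" by (rule sum.swap)
      also have "\<dots> = (\<Sum>v\<in>V. (if f v \<in> J then degw V w v else 0) / 2)"
        by (intro sum.cong refl) (auto simp: degw_def sum_divide_distrib[symmetric])
      also have "\<dots> = D / 2" by (simp add: dsum sum_divide_distrib)
      finally show ?thesis .
    qed
    have h1: "(\<Sum>p\<in>V\<times>V. if f (fst p) \<in> J then c p else 0) = D / 2"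
    proof -
      have "(\<Sum>p\<in>V\<times>V. if f (fst p) \<in> J then c p else 0)
          = (\<Sum>u\<in>V. \<Sum>v\<in>V. if f u \<in> J then w u v / 2 else 0)"
        unfolding c_def by (simp add: sum.cartesian_product case_prod_beta)
      also have "\<dots> = (\<Sum>u\<in>V. (if f u \<in> J then degw V w u else 0) / 2)"
        using sym by (intro sum.cong refl) (auto simp: degw_def sum_divide_distrib[symmetric])
      also have "\<dots> = D / 2" by (simp add: dsum sum_divide_distrib)
      finally show ?thesis .
    qed
    have "W \<le> (\<Sum>p\<in>V\<times>V. (if f (fst p) \<in> J then c p else 0) + (if f (snd p) \<in> J then c p else 0))"
      unfolding W_def T_def J_def using cnn by (intro sum_mono) auto
    also have "\<dots> = D" using h1 h2 by (simp add: sum.distrib)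
    finally show ?thesis .
  qed
  have pD: "\<phi> * Va + D > 0" using assms(8) by (simp add: \<phi>_def Va_def D_def)
  have "(\<phi> * Va * L)\<^sup>2 / (\<phi> * Va + D) \<le> E1 + L * y"
    by (rule final_alg[OF pnn Dnn pD Lpos xnn ynn xy CS Wnn WD E1nn])
  then show ?thesis using en
    by (simp add: \<phi>_def Va_def D_def L_def power_mult_distrib)
qed
end
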